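(* Let $1\le k<d$ and let $t\ge 1$ be an integer. For every multi-index $\alpha\in\mathbb{N}^d$ with $|\alpha|=t$ there exist an integer $m\ge1$, vectors $y^\alpha_{s,i}\in\mathbb{S}^{d-1}$ and real coefficients $f^\alpha_{s,i}$ ($s=1,\dots,t$, $i=1,\dots,m$) such that $$x^\alpha=\sum_{s=1}^t\sum_{i=1}^m f^\alpha_{s,i}\,\mu^s_{k,d}(E_{x,y^\alpha_{s,i}})\qquad\text{for all }x\in\mathbb{S}^{d-1}.$$
   Context: $\mathscr{H}_d$ denotes the space of real symmetric $d\times d$ matrices with inner product $\langle A,B\rangle=\operatorname{trace}(AB)$. $\mathcal{G}_{k,d}=\{P\in\mathscr{H}_d:P^2=P,\ \operatorname{trace}(P)=k\}$ is the set of rank-$k$ orthogonal projections of $\mathbb{R}^d$, and $\sigma_{k,d}$ is the orthogonally invariant Borel probability measure on $\mathcal{G}_{k,d}$ (invariant under $P\mapsto UPU^*$, $U\in\mathcal{O}(d)$). For $M\in\mathscr{H}_d$, $\mu^s_{k,d}(M):=\int_{\mathcal{G}_{k,d}}\langle P,M\rangle^s\,d\sigma_{k,d}(P)$. For $x,y\in\mathbb{R}^d$, $E_{x,y}:=\tfrac12(xy^*+yx^* )$. For $\alpha\in\mathbb{N}^d$, $x^\alpha=x_1^{\alpha_1}\cdots x_d^{\alpha_d}$ and $|\alpha|=\sum_i\alpha_i$. *)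

theory Defs
  imports "HOL-Probability.Probability"
begin

text \<open>Matrices in H_d are real symmetric d x d matrices, represented as real^'n^'n
  with CARD('n) = d.  Inner product <A,B> = trace (A B).\<close>

definition hs_inner :: "real^'n^'n \<Rightarrow> real^'n^'n \<Rightarrow> real" where
  "hs_inner A B = trace (A ** B)"

definition grassmann_proj :: "nat \<Rightarrow> (real^'n^'n) set" where
  "grassmann_proj k = {P. transpose P = P \<and> P ** P = P \<and> trace P = real k}"

definition orth_inv_grassmann_measure :: "nat \<Rightarrow> (real^'n^'n) measure \<Rightarrow> bool" where
  "orth_inv_grassmann_measure k \<sigma> \<longleftrightarrow>
     prob_space \<sigma> \<and>
     space \<sigma> = grassmann_proj k \<and>
     sets \<sigma> = sets (restrict_space borel (grassmann_proj k)) \<and>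
     (\<forall>U. orthogonal_matrix U \<longrightarrow>
        (\<forall>A\<in>sets \<sigma>. emeasure \<sigma> ((\<lambda>P. U ** P ** transpose U) -` A \<inter> space \<sigma>) = emeasure \<sigma> A))"

definition moment :: "(real^'n^'n) measure \<Rightarrow> nat \<Rightarrow> real^'n^'n \<Rightarrow> real" where
  "moment \<sigma> s M = (\<integral>P. (hs_inner P M) ^ s \<partial>\<sigma>)"

definition Exy :: "real^'n \<Rightarrow> real^'n \<Rightarrow> real^'n^'n" where
  "Exy x y = (\<chi> i j. (x$i * y$j + y$i * x$j) / 2)"

definition monomial :: "real^'n \<Rightarrow> ('n \<Rightarrow> nat) \<Rightarrow> real" where
  "monomial x \<alpha> = (\<Prod>i\<in>UNIV. (x$i) ^ (\<alpha> i))"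

end

theory Submission
  imports Defs "HOL-Library.Function_Algebras"
begin


instantiation "fun" :: (type, real_vector) real_vector
begin
definition scaleR_fun_def: "scaleR c f = (\<lambda>x. c *\<^sub>R f x)"
instance by standard (auto simp: scaleR_fun_def fun_eq_iff plus_fun_def algebra_simps)
end

lemma scaleR_fun_apply[simp]: "(c *\<^sub>R f) x = c *\<^sub>R f x" by (simp add: scaleR_fun_def)

lemma inj_surj_span:
  fixes F :: "'a::real_vector \<Rightarrow> 'a"
  assumes finB: "finite B"
    and into: "\<And>x. x \<in> span B \<Longrightarrow> F x \<in> span B"
    and add: "\<And>x y. x \<in> span B \<Longrightarrow> y \<in> span B \<Longrightarrow> F (x + y) = F x + F y"
    and scl: "\<And>c x. x \<in> span B \<Longrightarrow> F (c *\<^sub>R x) = c *\<^sub>R F x"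
    and inj: "\<And>x. x \<in> span B \<Longrightarrow> F x = 0 \<Longrightarrow> x = 0"
  shows "span B \<subseteq> F ` span B"
proof -
  obtain C where CB: "C \<subseteq> B" and indC: "independent C" and BC: "B \<subseteq> span C"
    using maximal_independent_subset[of B] by blast
  have finC: "finite C" using CB finB finite_subset by blast
  have spCB: "span C = span B"
    using span_mono[OF CB] span_minimal[OF BC subspace_span] by blast
  have Cin: "c \<in> span B" if "c \<in> C" for c using that spCB span_base by blast
  have sumF: "F (\<Sum>c\<in>T. u c *\<^sub>R c) = (\<Sum>c\<in>T. u c *\<^sub>R F c)" if "T \<subseteq> C" "finite T" for T u
    using that(2,1)
  proof (induction T rule: finite_induct)
    case empty
    have "F 0 = F (0 + 0)" by simp
    also have "\<dots> = F 0 + F 0" by (rule add) (auto simp: span_zero)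
    finally show ?case by simp
  next
    case (insert c T)
    have c: "c \<in> span B" using insert Cin by blast
    have s: "(\<Sum>c\<in>T. u c *\<^sub>R c) \<in> span B"
      by (intro span_sum span_scale) (use insert Cin in auto)
    have "F (\<Sum>c\<in>insert c T. u c *\<^sub>R c) = F (u c *\<^sub>R c + (\<Sum>c\<in>T. u c *\<^sub>R c))"
      using insert by simp
    also have "\<dots> = F (u c *\<^sub>R c) + F (\<Sum>c\<in>T. u c *\<^sub>R c)"
      by (rule add) (use c s in \<open>auto intro: span_scale\<close>)
    also have "\<dots> = u c *\<^sub>R F c + (\<Sum>c\<in>T. u c *\<^sub>R F c)"
      using insert scl c by auto
    finally show ?case using insert by simp
  qed
  have injC: "inj_on F C"
  proof
    fix a b assume a: "a \<in> C" and b: "b \<in> C" and e: "F a = F b"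
    have "F (a - b) + F b = F a"
      using add[of "a - b" b] a b Cin span_diff by (metis diff_add_cancel)
    then have "F (a - b) = 0" using e by simp
    then have "a - b = 0" using inj a b Cin span_diff by blast
    then show "a = b" by simp
  qed
  define D where "D = F ` C"
  have finD: "finite D" using finC D_def by simp
  have cardD: "card D = card C" using injC D_def card_image by blast
  have indD: "independent D"
    unfolding independent_explicit_finite_subsets
  proof (intro allI impI ballI)
    fix S u v assume SD: "S \<subseteq> D" and finS: "finite S" and sum0: "(\<Sum>v\<in>S. u v *\<^sub>R v) = 0" and vS: "v \<in> S"
    define T where "T = C \<inter> F -` S"
    have ST: "S = F ` T" using SD D_def T_def by auto
    have TC: "T \<subseteq> C" using T_def by auto
    have finT: "finite T" using TC finC finite_subset by blast
    have injT: "inj_on F T" using injC TC inj_on_subset by blast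
    have "(\<Sum>v\<in>S. u v *\<^sub>R v) = (\<Sum>c\<in>T. u (F c) *\<^sub>R F c)"
      unfolding ST by (simp add: sum.reindex[OF injT])
    also have "\<dots> = F (\<Sum>c\<in>T. u (F c) *\<^sub>R c)"
      using sumF[OF TC finT] by simp
    finally have "F (\<Sum>c\<in>T. u (F c) *\<^sub>R c) = 0" using sum0 by simp
    moreover have "(\<Sum>c\<in>T. u (F c) *\<^sub>R c) \<in> span B"
      by (intro span_sum span_scale) (use TC Cin in auto)
    ultimately have z: "(\<Sum>c\<in>T. u (F c) *\<^sub>R c) = 0" using inj by blast
    obtain c where c: "c \<in> T" "v = F c" using vS ST by auto
    have "\<forall>c\<in>T. u (F c) = 0"
      using indC[unfolded independent_explicit_finite_subsets, rule_format, OF TC finT, of "\<lambda>c. u (F c)"] z by simp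
    then show "u v = 0" using c by simp
  qed
  have DspC: "D \<subseteq> span C" using D_def into spCB Cin by auto
  have CD: "C \<subseteq> span D"
  proof
    fix c assume cC: "c \<in> C"
    show "c \<in> span D"
    proof (rule ccontr)
      assume nc: "c \<notin> span D"
      then have cnD: "c \<notin> D" using span_base by blast
      have ind: "independent (insert c D)" using indD nc cnD by (simp add: independent_insert)
      have "insert c D \<subseteq> span C" using DspC cC span_base by blast
      then have "card (insert c D) \<le> card C"
        using independent_span_bound[OF finC ind] by blast
      then show False using cardD cnD finD by simp
    qed
  qed
  have "span B \<subseteq> span D" using CD spCB by (metis span_minimal subspace_span)
  also have "span D \<subseteq> F ` span B"
  proof
    fix x assume "x \<in> span D"
    then obtain u where x: "x = (\<Sum>v\<in>D. u v *\<^sub>R v)" using span_finite[OF finD] by auto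
    also have "\<dots> = (\<Sum>c\<in>C. u (F c) *\<^sub>R F c)" unfolding D_def by (simp add: sum.reindex[OF injC])
    also have "\<dots> = F (\<Sum>c\<in>C. u (F c) *\<^sub>R c)" using sumF[OF _ finC] by simp
    moreover have "(\<Sum>c\<in>C. u (F c) *\<^sub>R c) \<in> span B"
      by (intro span_sum span_scale) (use Cin in auto)
    ultimately show "x \<in> F ` span B" by blast
  qed
  finally show ?thesis .
qed



fun sd :: "real list \<Rightarrow> (real \<Rightarrow> real) \<Rightarrow> real \<Rightarrow> real" where
  "sd [] f c = f c"
| "sd (u # us) f c = sd us (\<lambda>c. f (c + u) - f c) c"

lemma sd_sum: "finite K \<Longrightarrow> sd us (\<lambda>c. \<Sum>k\<in>K. f k c) c = (\<Sum>k\<in>K. sd us (f k) c)"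
proof (induction us arbitrary: f c)
  case Nil then show ?case by simp
next
  case (Cons u us)
  have "sd (u # us) (\<lambda>c. \<Sum>k\<in>K. f k c) c = sd us (\<lambda>c. \<Sum>k\<in>K. f k (c + u) - f k c) c"
    by (simp add: sum_subtractf)
  also have "\<dots> = (\<Sum>k\<in>K. sd us (\<lambda>c. f k (c + u) - f k c) c)"
    using Cons by simp
  finally show ?case by simp
qed

lemma sd_scale: "sd us (\<lambda>c. r * f c) c = r * sd us f c"
proof (induction us arbitrary: f c)
  case Nil then show ?case by simp
next
  case (Cons u us)
  have "sd (u # us) (\<lambda>c. r * f c) c = sd us (\<lambda>c. r * (f (c + u) - f c)) c"
    by (simp add: right_diff_distrib)
  then show ?case using Cons by simp
qed

lemma sd_diff: "sd us (\<lambda>c. f c - g c) c = sd us f c - sd us g c"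
proof (induction us arbitrary: f g c)
  case Nil then show ?case by simp
next
  case (Cons u us)
  have "sd (u # us) (\<lambda>c. f c - g c) c = sd us (\<lambda>c. (f (c + u) - f c) - (g (c + u) - g c)) c"
    by (simp add: algebra_simps)
  then show ?case using Cons by simp
qed

lemma sd_shift: "sd us (\<lambda>c. f (c + u)) c = sd us f (c + u)"
proof (induction us arbitrary: f c)
  case Nil then show ?case by simp
next
  case (Cons v us)
  have "sd (v # us) (\<lambda>c. f (c + u)) c = sd us (\<lambda>c. (\<lambda>c. f (c + v) - f c) (c + u)) c"
    by (simp add: algebra_simps)
  also have "\<dots> = sd us (\<lambda>c. f (c + v) - f c) (c + u)" by (rule Cons)
  finally show ?case by simp
qed

lemma sd_cons': "sd (u # us) f c = sd us f (c + u) - sd us f c"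
  by (simp add: sd_diff sd_shift)

lemma sd_pow: "m \<le> length us \<Longrightarrow> sd us (\<lambda>c. c ^ m) c = (if m = length us then fact m * prod_list us else 0)"
proof (induction us arbitrary: m c)
  case Nil then show ?case by simp
next
  case (Cons u us)
  have e: "(\<lambda>c. (c + u) ^ m - c ^ m) = (\<lambda>c. \<Sum>k<m. (real (m choose k) * u ^ (m - k)) * c ^ k)"
  proof
    fix c
    have "(c + u) ^ m = (\<Sum>k\<le>m. real (m choose k) * c ^ k * u ^ (m - k))"
      by (simp add: binomial_ring)
    also have "\<dots> = (\<Sum>k<m. real (m choose k) * c ^ k * u ^ (m - k)) + c ^ m"
      by (simp add: lessThan_Suc_atMost[symmetric])
    finally show "(c + u) ^ m - c ^ m = (\<Sum>k<m. (real (m choose k) * u ^ (m - k)) * c ^ k)"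
      by (simp add: algebra_simps)
  qed
  have "sd (u # us) (\<lambda>c. c ^ m) c = (\<Sum>k<m. (real (m choose k) * u ^ (m - k)) * sd us (\<lambda>c. c ^ k) c)"
    by (simp add: e sd_sum sd_scale)
  also have "\<dots> = (\<Sum>k<m. if k = length us then (real (m choose k) * u ^ (m - k)) * (fact k * prod_list us) else 0)"
    using Cons by (intro sum.cong) auto
  also have "\<dots> = (if length us < m then (real (m choose length us) * u ^ (m - length us)) * (fact (length us) * prod_list us) else 0)"
    by (simp add: sum.delta')
  also have "\<dots> = (if m = length (u # us) then fact m * prod_list (u # us) else 0)"
  proof (cases "m = Suc (length us)")
    case True
    then show ?thesis by (simp add: algebra_simps)
  next
    case False
    then show ?thesis using Cons by auto
  qed
  finally show ?case .
qed



definition pw :: "real^'n \<Rightarrow> nat \<Rightarrow> real^'n \<Rightarrow> real" where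
  "pw a t = (\<lambda>x. (inner a x) ^ t)"

definition Hs :: "nat \<Rightarrow> (real^'n \<Rightarrow> real) set" where
  "Hs t = span ((\<lambda>a. pw a t) ` {a. norm a = 1})"

definition WS :: "nat \<Rightarrow> (nat \<Rightarrow> 'n::finite) set" where
  "WS t = PiE {..<t} (\<lambda>_. UNIV)"

definition monoW :: "nat \<Rightarrow> (nat \<Rightarrow> 'n) \<Rightarrow> real^'n \<Rightarrow> real" where
  "monoW t w = (\<lambda>x. \<Prod>l<t. x $ (w l))"

lemma sum_fun_apply[simp]: "(\<Sum>w\<in>S. f w) x = (\<Sum>w\<in>S. f w x)"
  by (induction S rule: infinite_finite_induct) auto

lemma finite_WS[simp]: "finite (WS t)"
  unfolding WS_def by (intro finite_PiE) auto

lemma pw_Hs: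
  assumes "1 \<le> t" shows "pw a t \<in> Hs t"
proof (cases "a = 0")
  case True
  then have "pw a t = 0" using assms by (auto simp: pw_def fun_eq_iff)
  then show ?thesis by (simp add: Hs_def span_zero)
next
  case False
  have "pw a t = (norm a ^ t) *\<^sub>R pw (a /\<^sub>R norm a) t"
  proof
    fix x
    show "pw a t x = (norm a ^ t *\<^sub>R pw (a /\<^sub>R norm a) t) x"
      using False by (simp add: pw_def power_mult_distrib[symmetric] mult.assoc[symmetric])
  qed
  moreover have "pw (a /\<^sub>R norm a) t \<in> Hs t"
    unfolding Hs_def by (rule span_base) (use False in auto)
  ultimately show ?thesis by (simp add: Hs_def span_scale)
qed

lemma polar_Hs:
  assumes "1 \<le> t"
  shows "(\<lambda>x. sd (map (\<lambda>v. inner v x) vs) (\<lambda>c. c ^ t) (inner a x)) \<in> Hs t"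
proof (induction vs arbitrary: a)
  case Nil
  then show ?case using pw_Hs[OF assms, of a] by (simp add: pw_def)
next
  case (Cons v vs)
  have "(\<lambda>x. sd (map (\<lambda>v. inner v x) (v # vs)) (\<lambda>c. c ^ t) (inner a x))
     = (\<lambda>x. sd (map (\<lambda>v. inner v x) vs) (\<lambda>c. c ^ t) (inner (a + v) x))
       - (\<lambda>x. sd (map (\<lambda>v. inner v x) vs) (\<lambda>c. c ^ t) (inner a x))"
    by (rule ext) (simp only: list.map sd_cons' inner_add_left fun_diff_def)
  then show ?case using Cons[of "a + v"] Cons[of a] by (simp add: Hs_def span_diff)
qed

lemma prodlist_Hs:
  assumes "1 \<le> t" "length vs = t"
  shows "(\<lambda>x. prod_list (map (\<lambda>v. inner v x) vs)) \<in> Hs t"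
proof -
  have "(\<lambda>x. prod_list (map (\<lambda>v. inner v x) vs)) = (1 / fact t) *\<^sub>R (\<lambda>x. sd (map (\<lambda>v. inner v x) vs) (\<lambda>c. c ^ t) (inner 0 x))"
    using sd_pow[of t "map (\<lambda>v. inner v _) vs"] assms by (auto simp: fun_eq_iff)
  then show ?thesis using polar_Hs[OF assms(1), of vs 0] by (simp add: Hs_def span_scale)
qed

lemma prod_list_upt_lessThan: "prod_list (map f [0..<t]) = (\<Prod>l<t. f l)"
  by (induction t) (auto simp: lessThan_Suc mult_ac)

lemma mono_Hs:
  assumes "1 \<le> t" shows "monoW t w \<in> Hs t"
proof -
  have "monoW t w = (\<lambda>x. prod_list (map (\<lambda>v. inner v x) (map (\<lambda>l. axis (w l) (1::real)) [0..<t])))"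
    by (simp add: monoW_def fun_eq_iff o_def inner_axis' prod_list_upt_lessThan)
  then show ?thesis using prodlist_Hs[OF assms, of "map (\<lambda>l. axis (w l) (1::real)) [0..<t]"] by simp
qed

lemma pow_sum_expand:
  fixes f :: "'n::finite \<Rightarrow> real"
  shows "(\<Sum>j\<in>UNIV. f j) ^ t = (\<Sum>w\<in>WS t. \<Prod>l<t. f (w l))"
proof -
  have "(\<Sum>j\<in>UNIV. f j) ^ t = (\<Prod>l<t. \<Sum>j\<in>UNIV. f j)" by simp
  also have "\<dots> = (\<Sum>w\<in>WS t. \<Prod>l<t. f (w l))"
    unfolding WS_def by (rule prod_sum_PiE) auto
  finally show ?thesis .
qed

lemma pw_expand: fixes a :: "real^'n" shows "pw a t = (\<Sum>w\<in>WS t. (\<Prod>l<t. a $ (w l)) *\<^sub>R monoW t w)"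
proof
  fix x :: "real^'n"
  have "pw a t x = (\<Sum>j\<in>UNIV. a $ j * x $ j) ^ t" by (simp add: pw_def inner_vec_def)
  also have "\<dots> = (\<Sum>w\<in>WS t. \<Prod>l<t. a $ (w l) * x $ (w l))" by (rule pow_sum_expand)
  also have "\<dots> = (\<Sum>w\<in>WS t. (\<Prod>l<t. a $ (w l)) *\<^sub>R monoW t w) x"
    by (simp add: monoW_def prod.distrib)
  finally show "pw a t x = (\<Sum>w\<in>WS t. (\<Prod>l<t. a $ (w l)) *\<^sub>R monoW t w) x" .
qed

lemma Hs_eq:
  assumes "1 \<le> t" shows "Hs t = span (monoW t ` WS t)"
proof
  show "Hs t \<subseteq> span (monoW t ` WS t)"
    unfolding Hs_def
  proof (rule span_minimal[OF _ subspace_span])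
    show "(\<lambda>a. pw a t) ` {a. norm a = 1} \<subseteq> span (monoW t ` WS t)"
    proof
      fix g assume "g \<in> (\<lambda>a. pw a t) ` {a. norm a = 1}"
      then obtain a where g: "g = pw a t" by auto
      show "g \<in> span (monoW t ` WS t)"
        unfolding g pw_expand by (intro span_sum span_scale span_base) auto
    qed
  qed
  show "span (monoW t ` WS t) \<subseteq> Hs t"
    unfolding Hs_def using mono_Hs[OF assms]
    by (intro span_minimal) (auto simp: Hs_def subspace_span)
qed



lemma span_image_repr:
  fixes f :: "'b \<Rightarrow> 'a::real_vector"
  assumes "finite S" "x \<in> span (f ` S)"
  shows "\<exists>c. x = (\<Sum>s\<in>S. c s *\<^sub>R f s)"
  using assms(2)
proof (induction rule: span_induct)
  case (step x)
  then obtain s0 where s0: "s0 \<in> S" "x = f s0" by auto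
  have "x = (\<Sum>s\<in>S. (if s = s0 then 1 else 0) *\<^sub>R f s)"
    using s0 assms(1) by (simp add: if_distrib[of "\<lambda>c. c *\<^sub>R _"] sum.delta' cong: if_cong)
  then show ?case by (rule exI[where x="\<lambda>s. if s = s0 then 1 else 0"])
next
  case base
  show ?case unfolding subspace_def
  proof (intro conjI ballI allI)
    show "0 \<in> Collect (\<lambda>x. \<exists>c. x = (\<Sum>s\<in>S. c s *\<^sub>R f s))"
      by (auto intro!: exI[of _ "\<lambda>_. 0"])
  next
    fix x y assume "x \<in> Collect (\<lambda>x. \<exists>c. x = (\<Sum>s\<in>S. c s *\<^sub>R f s))" "y \<in> Collect (\<lambda>x. \<exists>c. x = (\<Sum>s\<in>S. c s *\<^sub>R f s))"
    then obtain c1 c2 where "x = (\<Sum>s\<in>S. c1 s *\<^sub>R f s)" "y = (\<Sum>s\<in>S. c2 s *\<^sub>R f s)" by auto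
    then have "x + y = (\<Sum>s\<in>S. (c1 s + c2 s) *\<^sub>R f s)" by (simp add: sum.distrib scaleR_add_left)
    then show "x + y \<in> Collect (\<lambda>x. \<exists>c. x = (\<Sum>s\<in>S. c s *\<^sub>R f s))"
      unfolding mem_Collect_eq by (rule exI[where x="\<lambda>s. c1 s + c2 s"])
  next
    fix r x assume "x \<in> Collect (\<lambda>x. \<exists>c. x = (\<Sum>s\<in>S. c s *\<^sub>R f s))"
    then obtain c1 where "x = (\<Sum>s\<in>S. c1 s *\<^sub>R f s)" by auto
    then have "r *\<^sub>R x = (\<Sum>s\<in>S. (r * c1 s) *\<^sub>R f s)" by (simp add: scaleR_sum_right)
    then show "r *\<^sub>R x \<in> Collect (\<lambda>x. \<exists>c. x = (\<Sum>s\<in>S. c s *\<^sub>R f s))"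
      unfolding mem_Collect_eq by (rule exI[where x="\<lambda>s. r * c1 s"])
  qed
qed

lemma Hs_repr:
  assumes "1 \<le> t" "g \<in> Hs t"
  shows "\<exists>c. g = (\<Sum>w\<in>WS t. c w *\<^sub>R monoW t w)"
  using span_image_repr[of "WS t" g "monoW t"] assms Hs_eq by auto

lemma mono_Pv_expand:
  fixes P :: "real^'n^'n"
  shows "monoW t w (P *v x) = (\<Sum>v\<in>WS t. (\<Prod>l<t. P $ (w l) $ (v l)) * monoW t v x)"
proof -
  have "monoW t w (P *v x) = (\<Prod>l<t. \<Sum>j\<in>UNIV. P $ (w l) $ j * x $ j)"
    by (simp add: monoW_def matrix_vector_mult_def)
  also have "\<dots> = (\<Sum>v\<in>WS t. \<Prod>l<t. P $ (w l) $ (v l) * x $ (v l))"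
    unfolding WS_def by (rule prod_sum_PiE) auto
  also have "\<dots> = (\<Sum>v\<in>WS t. (\<Prod>l<t. P $ (w l) $ (v l)) * monoW t v x)"
    by (simp add: monoW_def prod.distrib)
  finally show ?thesis .
qed

locale grass =
  fixes \<sigma> :: "(real^'n^'n) measure" and k :: nat
  assumes oi: "orth_inv_grassmann_measure k \<sigma>" and k1: "1 \<le> k"
begin

lemma prob: "prob_space \<sigma>" using oi by (simp add: orth_inv_grassmann_measure_def)
lemma space_eq: "space \<sigma> = grassmann_proj k" using oi by (simp add: orth_inv_grassmann_measure_def)
lemma sets_eq: "sets \<sigma> = sets (restrict_space borel (grassmann_proj k))" using oi by (simp add: orth_inv_grassmann_measure_def)
lemma invar: "orthogonal_matrix U \<Longrightarrow> A \<in> sets \<sigma> \<Longrightarrow>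
   emeasure \<sigma> ((\<lambda>P. U ** P ** transpose U) -` A \<inter> space \<sigma>) = emeasure \<sigma> A"
proof -
  have "\<forall>U. orthogonal_matrix U \<longrightarrow> (\<forall>A\<in>sets \<sigma>. emeasure \<sigma> ((\<lambda>P. U ** P ** transpose U) -` A \<inter> space \<sigma>) = emeasure \<sigma> A)"
    using oi unfolding orth_inv_grassmann_measure_def by blast
  then show "orthogonal_matrix U \<Longrightarrow> A \<in> sets \<sigma> \<Longrightarrow>
   emeasure \<sigma> ((\<lambda>P. U ** P ** transpose U) -` A \<inter> space \<sigma>) = emeasure \<sigma> A" by blast
qed

sublocale prob_space \<sigma> by (rule prob)

lemma meas_cont: "continuous_on UNIV (f :: real^'n^'n \<Rightarrow> real) \<Longrightarrow> f \<in> borel_measurable \<sigma>"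
  by (subst measurable_cong_sets[OF sets_eq refl]) (intro measurable_restrict_space1 borel_measurable_continuous_onI)

lemma G_sym: "P \<in> grassmann_proj k \<Longrightarrow> P $ i $ j = P $ j $ i"
  unfolding grassmann_proj_def by (metis (mono_tags, lifting) mem_Collect_eq transpose_def vec_lambda_beta)

lemma G_idem: "P \<in> grassmann_proj k \<Longrightarrow> P ** P = P"
  unfolding grassmann_proj_def by simp

lemma G_entry: assumes "P \<in> grassmann_proj k" shows "\<bar>P $ i $ j\<bar> \<le> 1"
proof -
  have d: "P $ i $ i = (\<Sum>m\<in>UNIV. (P $ i $ m)\<^sup>2)" for i
  proof -
    have "P $ i $ i = (P ** P) $ i $ i" using G_idem[OF assms] by simp
    also have "\<dots> = (\<Sum>m\<in>UNIV. P $ i $ m * P $ m $ i)" by (simp add: matrix_matrix_mult_def)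
    also have "\<dots> = (\<Sum>m\<in>UNIV. (P $ i $ m)\<^sup>2)" using G_sym[OF assms] by (simp add: power2_eq_square)
    finally show ?thesis .
  qed
  have le: "(P $ i $ m)\<^sup>2 \<le> P $ i $ i" for m
    unfolding d[of i] by (rule member_le_sum) auto
  have "(P $ i $ i)\<^sup>2 \<le> P $ i $ i" using le[of i] .
  moreover have "0 \<le> P $ i $ i" using le[of i] by (meson order_trans zero_le_power2)
  ultimately have "P $ i $ i \<le> 1"
  proof (rule_tac ccontr)
    assume sq: "(P $ i $ i)\<^sup>2 \<le> P $ i $ i" and "\<not> P $ i $ i \<le> 1"
    then have "1 < P $ i $ i" by simp
    then have "P $ i $ i * 1 < P $ i $ i * P $ i $ i" by (intro mult_strict_left_mono) auto
    then show False using sq by (simp add: power2_eq_square)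
  qed
  then have "(P $ i $ j)\<^sup>2 \<le> 1" using le[of j] by linarith
  then show ?thesis by (simp add: abs_square_le_1)
qed

lemma int_bound:
  assumes "continuous_on UNIV f" "\<And>P. P \<in> grassmann_proj k \<Longrightarrow> \<bar>f P\<bar> \<le> B"
  shows "integrable \<sigma> (f :: real^'n^'n \<Rightarrow> real)"
  by (rule integrable_const_bound[where B=B]) (use assms meas_cont space_eq in auto)

lemma int_entries:
  fixes t :: nat
  shows "integrable \<sigma> (\<lambda>P. \<Prod>l<t. P $ (r l) $ (s l))"
proof (rule int_bound[where B=1])
  show "continuous_on UNIV (\<lambda>P. (\<Prod>l<t. P $ (r l) $ (s l)) :: real)"
    by (auto intro!: continuous_intros)
  fix P :: "real^'n^'n" assume P: "P \<in> grassmann_proj k"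
  have "\<bar>\<Prod>l<t. P $ (r l) $ (s l)\<bar> = (\<Prod>l<t. \<bar>P $ (r l) $ (s l)\<bar>)" by (simp add: abs_prod)
  also have "\<dots> \<le> 1" by (intro prod_le_1) (auto simp: G_entry[OF P])
  finally show "\<bar>\<Prod>l<t. P $ (r l) $ (s l)\<bar> \<le> 1" .
qed

lemma int_mono: fixes t :: nat shows "integrable \<sigma> (\<lambda>P. monoW t w (P *v x))"
  unfolding mono_Pv_expand by (auto intro!: int_entries)

lemma int_Hs:
  assumes "1 \<le> t" "g \<in> Hs t"
  shows "integrable \<sigma> (\<lambda>P. g (P *v x))"
proof -
  obtain c where g: "g = (\<Sum>w\<in>WS t. c w *\<^sub>R monoW t w)" using Hs_repr[OF assms] by blast
  show ?thesis unfolding g by (simp add: int_mono)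
qed

definition KK :: "(real^'n \<Rightarrow> real) \<Rightarrow> real^'n \<Rightarrow> real" where
  "KK g = (\<lambda>x. \<integral>P. g (P *v x) \<partial>\<sigma>)"

lemma KK_mono: "KK (monoW t w) = (\<Sum>v\<in>WS t. (\<integral>P. (\<Prod>l<t. P $ (w l) $ (v l)) \<partial>\<sigma>) *\<^sub>R monoW t v)"
proof
  fix x
  show "KK (monoW t w) x = (\<Sum>v\<in>WS t. (\<integral>P. (\<Prod>l<t. P $ (w l) $ (v l)) \<partial>\<sigma>) *\<^sub>R monoW t v) x"
    unfolding KK_def mono_Pv_expand by (simp add: int_entries)
qed

lemma KK_mono_Hs: "1 \<le> t \<Longrightarrow> KK (monoW t w) \<in> Hs t"
  unfolding KK_mono Hs_def by (intro span_sum span_scale) (auto simp: Hs_def[symmetric] mono_Hs)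

lemma KK_add: "1 \<le> t \<Longrightarrow> g \<in> Hs t \<Longrightarrow> h \<in> Hs t \<Longrightarrow> KK (g + h) = KK g + KK h"
  unfolding KK_def by (auto simp: fun_eq_iff int_Hs)

lemma KK_scale: "KK (c *\<^sub>R g) = c *\<^sub>R KK g"
  unfolding KK_def by (auto simp: fun_eq_iff)

lemma KK_Hs:
  assumes "1 \<le> t" "g \<in> Hs t" shows "KK g \<in> Hs t"
proof -
  obtain c where g: "g = (\<Sum>w\<in>WS t. c w *\<^sub>R monoW t w)" using Hs_repr[OF assms] by blast
  have "KK g = (\<Sum>w\<in>WS t. c w *\<^sub>R KK (monoW t w))"
    unfolding g KK_def by (auto simp: fun_eq_iff int_mono)
  also have "\<dots> \<in> Hs t"
    using KK_mono_Hs[OF assms(1)] by (auto simp: Hs_def intro!: span_sum span_scale)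
  finally show ?thesis .
qed

end


lemma pow_inner_expand:
  fixes a b :: "real^'n"
  shows "(inner a b) ^ t = (\<Sum>w\<in>WS t. monoW t w a * monoW t w b)"
proof -
  have "(inner a b) ^ t = (\<Sum>j\<in>UNIV. a $ j * b $ j) ^ t" by (simp add: inner_vec_def)
  also have "\<dots> = (\<Sum>w\<in>WS t. \<Prod>l<t. a $ (w l) * b $ (w l))" by (rule pow_sum_expand)
  also have "\<dots> = (\<Sum>w\<in>WS t. monoW t w a * monoW t w b)" by (simp add: monoW_def prod.distrib)
  finally show ?thesis .
qed

lemma G_conj:
  fixes U P :: "real^'n^'n"
  assumes U: "orthogonal_matrix U" and P: "P \<in> grassmann_proj k"
  shows "U ** P ** transpose U \<in> grassmann_proj k"
proof -
  have UU: "transpose U ** U = mat 1" using U by (simp add: orthogonal_matrix)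
  have t: "transpose P = P" and i: "P ** P = P" and tr: "trace P = real k"
    using P by (auto simp: grassmann_proj_def)
  have "transpose (U ** P ** transpose U) = U ** P ** transpose U"
    by (simp add: matrix_transpose_mul t matrix_mul_assoc)
  moreover have "(U ** P ** transpose U) ** (U ** P ** transpose U) = U ** P ** transpose U"
  proof -
    have "(U ** P ** transpose U) ** (U ** P ** transpose U) = U ** P ** (transpose U ** U) ** P ** transpose U"
      by (simp add: matrix_mul_assoc)
    also have "\<dots> = U ** (P ** P) ** transpose U" by (simp add: UU matrix_mul_assoc)
    finally show ?thesis by (simp add: i)
  qed
  moreover have "trace (U ** P ** transpose U) = real k"
  proof -
    have "trace (U ** P ** transpose U) = trace (transpose U ** (U ** P))" by (rule trace_mul_sym)
    also have "\<dots> = trace P" by (simp add: matrix_mul_assoc UU)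
    finally show ?thesis using tr by simp
  qed
  ultimately show ?thesis by (simp add: grassmann_proj_def)
qed

lemma G_inner_sym:
  fixes P :: "real^'n^'n"
  assumes P: "P \<in> grassmann_proj k"
  shows "inner a (P *v b) = inner (P *v a) b"
proof -
  have t: "transpose P = P" using P by (auto simp: grassmann_proj_def)
  have "inner a (P *v b) = inner (a v* P) b" by (simp add: dot_lmul_matrix)
  also have "a v* P = transpose P *v a" by simp
  finally show ?thesis using t by simp
qed

lemma G_proj_inner:
  fixes P :: "real^'n^'n"
  assumes P: "P \<in> grassmann_proj k"
  shows "inner a (P *v b) = inner (P *v a) (P *v b)"
proof -
  have i: "P ** P = P" using P by (auto simp: grassmann_proj_def)
  have "inner a (P *v b) = inner a (P *v (P *v b))" by (simp add: matrix_vector_mul_assoc i)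
  also have "\<dots> = inner (P *v a) (P *v b)" by (rule G_inner_sym[OF P])
  finally show ?thesis .
qed

lemma G_fixed_unit:
  fixes P :: "real^'n^'n"
  assumes P: "P \<in> grassmann_proj k" and k: "1 \<le> k"
  shows "\<exists>u. norm u = 1 \<and> P *v u = u"
proof -
  have i: "P ** P = P" and tr: "trace P = real k" using P by (auto simp: grassmann_proj_def)
  have col: "(P *v axis j 1) $ i = P $ i $ j" for i j
    by (simp add: matrix_vector_mult_def axis_def if_distrib[of "\<lambda>x. _ * x"] cong: if_cong)
  have "\<exists>j. P *v axis j 1 \<noteq> 0"
  proof (rule ccontr)
    assume "\<not> ?thesis"
    then have "P $ i $ j = 0" for i j using col[of j i] by (metis zero_index)
    then have "trace P = 0" by (simp add: trace_def)
    then show False using tr k by simp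
  qed
  then obtain j where v0: "P *v axis j 1 \<noteq> 0" by blast
  define v where "v = P *v axis j 1"
  have Pv: "P *v v = v" unfolding v_def by (simp add: matrix_vector_mul_assoc i)
  define u where "u = v /\<^sub>R norm v"
  have "norm u = 1" using v0 by (simp add: u_def v_def)
  moreover have "P *v u = u" by (simp add: u_def matrix_vector_mult_scaleR Pv)
  ultimately show ?thesis by blast
qed

lemma orth_map:
  fixes u z :: "real^'n"
  assumes "norm u = 1" "norm z = 1"
  obtains U where "orthogonal_matrix U" "U *v u = z"
proof -
  obtain A where A: "orthogonal_matrix A" "A *v (axis i 1) = u"
    using orthogonal_matrix_exists_basis[OF assms(1)] by metis
  obtain B where B: "orthogonal_matrix B" "B *v (axis i 1) = z"
    using orthogonal_matrix_exists_basis[OF assms(2)] by metis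
  have "orthogonal_matrix (B ** transpose A)" by (simp add: A B orthogonal_matrix_mul)
  moreover have "(B ** transpose A) *v u = z"
    using A B unfolding orthogonal_matrix_def
    by (metis matrix_mul_rid matrix_vector_mul_assoc)
  ultimately show ?thesis using that by blast
qed



context grass
begin

lemma Hs_repr_pw:
  assumes "g \<in> Hs t"
  shows "\<exists>A c. finite A \<and> A \<subseteq> {a. norm a = 1} \<and> g = (\<Sum>a\<in>A. c a *\<^sub>R pw a t)"
proof -
  obtain S u where S: "finite S" "S \<subseteq> (\<lambda>a. pw a t) ` {a. norm a = 1}" and g: "g = (\<Sum>v\<in>S. u v *\<^sub>R v)"
    using assms unfolding Hs_def span_explicit by blast
  obtain A where A: "A \<subseteq> {a. norm a = 1}" "finite A" "S = (\<lambda>a. pw a t) ` A"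
    using finite_subset_image[OF S] by blast
  have "g \<in> span ((\<lambda>a. pw a t) ` A)"
    unfolding g A(3) by (intro span_sum span_scale span_base) auto
  then show ?thesis using span_image_repr[OF A(2)] A(1,2) by blast
qed

lemma KK_inj:
  assumes t1: "1 \<le> t" and gH: "g \<in> Hs t" and K0: "KK g = 0"
  shows "g = 0"
proof (rule ccontr)
  assume gne: "g \<noteq> 0"
  obtain A c where finA: "finite A" and g: "g = (\<Sum>a\<in>A. c a *\<^sub>R pw a t)"
    using Hs_repr_pw[OF gH] by blast
  have gx: "g x = (\<Sum>a\<in>A. c a * (inner a x) ^ t)" for x
    unfolding g by (simp add: pw_def)
  define h where "h P w = (\<Sum>a\<in>A. c a * monoW t w (P *v a))" for P :: "real^'n^'n" and w
  define \<psi> where "\<psi> P = (\<Sum>b\<in>A. c b * g (P *v b))" for P :: "real^'n^'n"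
  have gP: "g (P *v x) = (\<Sum>w\<in>WS t. h P w * monoW t w x)" if P: "P \<in> grassmann_proj k" for P x
  proof -
    have "g (P *v x) = (\<Sum>a\<in>A. c a * (inner (P *v a) x) ^ t)"
      unfolding gx using G_inner_sym[OF P] by simp
    also have "\<dots> = (\<Sum>a\<in>A. \<Sum>w\<in>WS t. c a * monoW t w (P *v a) * monoW t w x)"
      unfolding pow_inner_expand sum_distrib_left by (intro sum.cong refl) (simp only: mult.assoc)
    also have "\<dots> = (\<Sum>w\<in>WS t. h P w * monoW t w x)"
      unfolding h_def by (subst sum.swap) (simp add: sum_distrib_right)
    finally show ?thesis .
  qed
  have psiG: "\<psi> P = (\<Sum>w\<in>WS t. (h P w)\<^sup>2)" if P: "P \<in> grassmann_proj k" for P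
  proof -
    have "\<psi> P = (\<Sum>b\<in>A. c b * (\<Sum>a\<in>A. c a * (inner (P *v a) (P *v b)) ^ t))"
      unfolding \<psi>_def gx using G_proj_inner[OF P] by simp
    also have "\<dots> = (\<Sum>b\<in>A. \<Sum>a\<in>A. \<Sum>w\<in>WS t. (c b * monoW t w (P *v b)) * (c a * monoW t w (P *v a)))"
    proof -
      have e: "c b * (c a * (inner (P *v a) (P *v b)) ^ t) = (\<Sum>w\<in>WS t. (c b * monoW t w (P *v b)) * (c a * monoW t w (P *v a)))" for a b
        unfolding pow_inner_expand sum_distrib_left by (intro sum.cong refl) (simp only: mult_ac)
      show ?thesis by (simp only: sum_distrib_left e)
    qed
    also have "\<dots> = (\<Sum>b\<in>A. \<Sum>w\<in>WS t. \<Sum>a\<in>A. (c b * monoW t w (P *v b)) * (c a * monoW t w (P *v a)))"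
      by (intro sum.cong refl) (rule sum.swap)
    also have "\<dots> = (\<Sum>w\<in>WS t. \<Sum>b\<in>A. \<Sum>a\<in>A. (c b * monoW t w (P *v b)) * (c a * monoW t w (P *v a)))"
      by (rule sum.swap)
    also have "\<dots> = (\<Sum>w\<in>WS t. (h P w)\<^sup>2)"
      unfolding h_def power2_eq_square sum_product ..
    finally show ?thesis .
  qed
  have psi_nonneg: "0 \<le> \<psi> P" if "P \<in> grassmann_proj k" for P
    using psiG[OF that] by (simp add: sum_nonneg)
  have psi0: "g (P *v x) = 0" if P: "P \<in> grassmann_proj k" and z: "\<psi> P = 0" for P x
  proof -
    have "\<forall>w\<in>WS t. (h P w)\<^sup>2 = 0"
    proof -
      have "(\<Sum>w\<in>WS t. (h P w)\<^sup>2) = 0" using z psiG[OF P] by simp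
      then show ?thesis using sum_nonneg_eq_0_iff[where A="WS t" and f="\<lambda>w. (h P w)\<^sup>2"] by simp
    qed
    then show ?thesis using gP[OF P] by simp
  qed
  have psi_int: "integrable \<sigma> \<psi>"
    unfolding \<psi>_def using int_Hs[OF t1 gH] by auto
  have "integral\<^sup>L \<sigma> \<psi> = (\<Sum>b\<in>A. c b * KK g b)"
    unfolding \<psi>_def KK_def using int_Hs[OF t1 gH] by simp
  also have "\<dots> = 0" using K0 by simp
  finally have int0: "integral\<^sup>L \<sigma> \<psi> = 0" .
  have AE0: "AE P in \<sigma>. \<psi> P = 0"
    using integral_nonneg_eq_0_iff_AE[OF psi_int] int0 psi_nonneg space_eq by auto
  have ghom: "g (r *\<^sub>R x) = r ^ t * g x" for r x
    unfolding gx by (simp add: power_mult_distrib sum_distrib_left mult_ac)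
  have g0: "g 0 = 0" unfolding gx using t1 by (simp add: power_0_left)
  obtain z0 where z0: "g z0 \<noteq> 0" using gne by (auto simp: fun_eq_iff)
  have z0ne: "z0 \<noteq> 0" using z0 g0 by auto
  define z where "z = z0 /\<^sub>R norm z0"
  have nz: "norm z = 1" using z0ne by (simp add: z_def)
  have gz: "g z \<noteq> 0" using z0 z0ne unfolding z_def ghom by simp
  have psicont: "continuous_on UNIV \<psi>"
    unfolding \<psi>_def gx inner_vec_def matrix_vector_mult_def by (auto intro!: continuous_intros)
  have conjcont: "continuous_on UNIV (\<lambda>P::real^'n^'n. U ** P ** transpose U)" for U :: "real^'n^'n"
    unfolding matrix_matrix_mult_def by (auto intro!: continuous_intros)
  have cc: "continuous_on UNIV (\<lambda>P. \<psi> (U ** P ** transpose U))" for U :: "real^'n^'n"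
    by (rule continuous_on_compose2[OF psicont conjcont[of U]]) auto
  have bor: "{x::real. x \<noteq> 0} \<in> sets borel"
    by (intro borel_open open_Collect_neq continuous_intros)
  have msets: "{P \<in> space \<sigma>. f P \<noteq> 0} \<in> sets \<sigma>" if "continuous_on UNIV f" for f :: "real^'n^'n \<Rightarrow> real"
    using measurable_sets_Collect[OF meas_cont[OF that], of "\<lambda>x. x \<noteq> 0"] bor by simp
  define N where "N = {P \<in> space \<sigma>. \<psi> P \<noteq> 0}"
  have Nsets: "N \<in> sets \<sigma>" unfolding N_def by (rule msets[OF psicont])
  have N0: "emeasure \<sigma> N = 0"
    using AE_iff_measurable[OF Nsets, of "\<lambda>P. \<psi> P = 0"] AE0 by (simp add: N_def)
  define Oc where "Oc U = {P. \<psi> (U ** P ** transpose U) \<noteq> 0}" for U :: "real^'n^'n"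
  have Onull: "Oc U \<inter> space \<sigma> \<in> null_sets \<sigma>" if U: "orthogonal_matrix U" for U
  proof (rule null_setsI)
    have eq: "Oc U \<inter> space \<sigma> = (\<lambda>P. U ** P ** transpose U) -` N \<inter> space \<sigma>"
      using G_conj[OF U] by (auto simp: Oc_def N_def space_eq)
    show "emeasure \<sigma> (Oc U \<inter> space \<sigma>) = 0" unfolding eq invar[OF U Nsets] N0 ..
    have "Oc U \<inter> space \<sigma> = {P \<in> space \<sigma>. \<psi> (U ** P ** transpose U) \<noteq> 0}"
      by (auto simp: Oc_def)
    then show "Oc U \<inter> space \<sigma> \<in> sets \<sigma>" using msets[OF cc] by simp
  qed
  have cover: "\<exists>U. orthogonal_matrix U \<and> P \<in> Oc U" if P: "P \<in> grassmann_proj k" for P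
  proof -
    obtain u where u: "norm u = 1" "P *v u = u" using G_fixed_unit[OF P k1] by blast
    obtain U where U: "orthogonal_matrix U" "U *v u = z" using orth_map[OF u(1) nz] by blast
    have UU: "transpose U ** U = mat 1" using U(1) by (simp add: orthogonal_matrix)
    define Q where "Q = U ** P ** transpose U"
    have QG: "Q \<in> grassmann_proj k" unfolding Q_def by (rule G_conj[OF U(1) P])
    have "transpose U *v z = u"
      unfolding U(2)[symmetric] by (simp add: matrix_vector_mul_assoc UU)
    then have Qz: "Q *v z = z"
      unfolding Q_def by (simp add: matrix_vector_mul_assoc[symmetric] u(2) U(2))
    have "\<psi> Q \<noteq> 0"
    proof
      assume "\<psi> Q = 0"
      then have "g (Q *v z) = 0" using psi0[OF QG] by blast
      then show False using Qz gz by simp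
    qed
    then show ?thesis using U(1) by (auto simp: Oc_def Q_def)
  qed
  obtain F where F: "F \<subseteq> Oc ` {U. orthogonal_matrix U}" "countable F" "\<Union>F = \<Union>(Oc ` {U. orthogonal_matrix U})"
  proof (rule Lindelof[of "Oc ` {U. orthogonal_matrix U}"])
    fix S assume "S \<in> Oc ` {U. orthogonal_matrix U}"
    then obtain U where "S = Oc U" by blast
    then show "open S" unfolding Oc_def by (simp add: open_Collect_neq[OF cc continuous_on_const])
  qed blast
  have "(\<Union>S\<in>F. S \<inter> space \<sigma>) \<in> null_sets \<sigma>"
  proof (rule null_sets_UN'[OF F(2)])
    fix S assume "S \<in> F"
    then obtain U where "orthogonal_matrix U" "S = Oc U" using F(1) by blast
    then show "S \<inter> space \<sigma> \<in> null_sets \<sigma>" using Onull by simp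
  qed
  moreover have "(\<Union>S\<in>F. S \<inter> space \<sigma>) = space \<sigma>"
  proof
    show "(\<Union>S\<in>F. S \<inter> space \<sigma>) \<subseteq> space \<sigma>" by auto
    show "space \<sigma> \<subseteq> (\<Union>S\<in>F. S \<inter> space \<sigma>)"
    proof
      fix P assume P: "P \<in> space \<sigma>"
      then obtain U where "orthogonal_matrix U" "P \<in> Oc U" using cover space_eq by blast
      then have "P \<in> \<Union>F" using F(3) by blast
      then show "P \<in> (\<Union>S\<in>F. S \<inter> space \<sigma>)" using P by blast
    qed
  qed
  ultimately have sn: "space \<sigma> \<in> null_sets \<sigma>" by simp
  show False using null_setsD1[OF sn] emeasure_space_1 by simp
qed

end


lemma prod_list_concat_rep:
  "prod_list (map f (concat (map (\<lambda>i. replicate (\<alpha> i) i) xs))) = prod_list (map (\<lambda>i. (f i :: real) ^ \<alpha> i) xs)"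
  by (induction xs) (auto simp: prod_list_replicate)

lemma monomial_Hs:
  fixes \<alpha> :: "'n::finite \<Rightarrow> nat"
  assumes t1: "1 \<le> t" and sa: "(\<Sum>i\<in>UNIV. \<alpha> i) = t"
  shows "(\<lambda>x::real^'n. monomial x \<alpha>) \<in> Hs t"
proof -
  obtain xs :: "'n list" where xs: "set xs = UNIV" "distinct xs"
    using finite_distinct_list[of "UNIV :: 'n set"] by auto
  define L where "L = concat (map (\<lambda>i. replicate (\<alpha> i) i) xs)"
  have lenL: "length L = t"
  proof -
    have "length L = sum_list (map \<alpha> xs)" unfolding L_def by (induction xs) auto
    also have "\<dots> = (\<Sum>i\<in>set xs. \<alpha> i)" using xs(2) by (simp add: sum.distinct_set_conv_list)
    finally show ?thesis using xs(1) sa by simp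
  qed
  have "(\<lambda>x::real^'n. monomial x \<alpha>) = (\<lambda>x. prod_list (map (\<lambda>v. inner v x) (map (\<lambda>i. axis i (1::real)) L)))"
  proof
    fix x :: "real^'n"
    have "monomial x \<alpha> = (\<Prod>i\<in>set xs. x $ i ^ \<alpha> i)" using xs(1) by (simp add: monomial_def)
    also have "\<dots> = prod_list (map (\<lambda>i. x $ i ^ \<alpha> i) xs)" using xs(2) by (simp add: prod.distinct_set_conv_list)
    also have "\<dots> = prod_list (map (\<lambda>i. x $ i) L)" unfolding L_def by (rule prod_list_concat_rep[symmetric])
    also have "\<dots> = prod_list (map (\<lambda>v. inner v x) (map (\<lambda>i. axis i (1::real)) L))"
      by (simp add: o_def inner_axis')
    finally show "monomial x \<alpha> = prod_list (map (\<lambda>v. inner v x) (map (\<lambda>i. axis i (1::real)) L))" .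
  qed
  then show ?thesis using prodlist_Hs[OF t1, of "map (\<lambda>i. axis i (1::real)) L"] lenL by simp
qed

lemma hs_Exy:
  fixes P :: "real^'n^'n"
  assumes P: "P \<in> grassmann_proj k"
  shows "hs_inner P (Exy x y) = inner y (P *v x)"
proof -
  have sym: "P $ i $ j = P $ j $ i" for i j
    using P unfolding grassmann_proj_def by (metis (mono_tags, lifting) mem_Collect_eq transpose_def vec_lambda_beta)
  define S1 where "S1 = (\<Sum>i\<in>UNIV. \<Sum>j\<in>UNIV. P $ i $ j * x $ j * y $ i)"
  define S2 where "S2 = (\<Sum>i\<in>UNIV. \<Sum>j\<in>UNIV. P $ i $ j * y $ j * x $ i)"
  have h1: "hs_inner P (Exy x y) = (S1 + S2) / 2"
  proof -
    have "hs_inner P (Exy x y) = (\<Sum>i\<in>UNIV. \<Sum>j\<in>UNIV. P $ i $ j * ((x $ j * y $ i + y $ j * x $ i) / 2))"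
      by (simp add: hs_inner_def trace_def matrix_matrix_mult_def Exy_def)
    also have "\<dots> = (\<Sum>i\<in>UNIV. \<Sum>j\<in>UNIV. (P $ i $ j * x $ j * y $ i + P $ i $ j * y $ j * x $ i) / 2)"
      by (rule sum.cong[OF refl], rule sum.cong[OF refl]) (simp add: field_simps)
    also have "\<dots> = (S1 + S2) / 2"
      unfolding S1_def S2_def by (simp only: sum_divide_distrib[symmetric] sum.distrib[symmetric])
    finally show ?thesis .
  qed
  have h2: "S2 = S1"
  proof -
    have "S2 = (\<Sum>j\<in>UNIV. \<Sum>i\<in>UNIV. P $ i $ j * y $ j * x $ i)" unfolding S2_def by (rule sum.swap)
    also have "\<dots> = S1" unfolding S1_def by (intro sum.cong refl) (subst sym, simp only: mult_ac)
    finally show ?thesis .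
  qed
  have h3: "S1 = inner y (P *v x)"
    unfolding S1_def inner_vec_def matrix_vector_mult_def
    by (simp add: sum_distrib_left mult_ac)
  show ?thesis using h1 h2 h3 by simp
qed

theorem theorem2p1:
  fixes \<sigma> :: "(real^'n^'n) measure" and k t :: nat and \<alpha> :: "'n \<Rightarrow> nat"
  assumes "1 \<le> k" and "k < CARD('n)" and "1 \<le> t"
    and "orth_inv_grassmann_measure k \<sigma>"
    and "(\<Sum>i\<in>UNIV. \<alpha> i) = t"
  shows "\<exists>(m::nat) (y :: nat \<Rightarrow> nat \<Rightarrow> real^'n) (f :: nat \<Rightarrow> nat \<Rightarrow> real).
           1 \<le> m \<and>
           (\<forall>s\<in>{1..t}. \<forall>i\<in>{1..m}. norm (y s i) = 1) \<and>
           (\<forall>x::real^'n. norm x = 1 \<longrightarrow>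
              monomial x \<alpha> = (\<Sum>s=1..t. \<Sum>i=1..m. f s i * moment \<sigma> s (Exy x (y s i))))"
proof -
  interpret grass \<sigma> k using assms(1,4) by unfold_locales
  have t1: "1 \<le> t" by fact
  have monH: "(\<lambda>x::real^'n. monomial x \<alpha>) \<in> Hs t" by (rule monomial_Hs[OF t1 assms(5)])
  have HB: "span (monoW t ` WS t) = Hs t" by (rule Hs_eq[OF t1, symmetric])
  have "span (monoW t ` WS t) \<subseteq> KK ` span (monoW t ` WS t)"
  proof (rule inj_surj_span)
    show "finite (monoW t ` WS t)" by simp
    show "KK x \<in> span (monoW t ` WS t)" if "x \<in> span (monoW t ` WS t)" for x
      using that KK_Hs[OF t1] unfolding HB by blast
    show "KK (x + y) = KK x + KK y" if "x \<in> span (monoW t ` WS t)" "y \<in> span (monoW t ` WS t)" for x y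
      using that KK_add[OF t1] unfolding HB by blast
    show "KK (c *\<^sub>R x) = c *\<^sub>R KK x" for c x by (rule KK_scale)
    show "x = 0" if "x \<in> span (monoW t ` WS t)" "KK x = 0" for x
      using that KK_inj[OF t1] unfolding HB by blast
  qed
  then have sub: "Hs t \<subseteq> KK ` Hs t" unfolding HB .
  have "(\<lambda>x. monomial x \<alpha>) \<in> KK ` Hs t" using sub monH by (rule subsetD)
  then obtain g where gH: "g \<in> Hs t" and Kg0: "(\<lambda>x. monomial x \<alpha>) = KK g" by (rule imageE)
  have Kg: "KK g x = monomial x \<alpha>" for x using Kg0 by (metis (no_types))
  obtain A c where finA: "finite A" and Au: "A \<subseteq> {a. norm a = 1}" and g: "g = (\<Sum>a\<in>A. c a *\<^sub>R pw a t)"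
    using Hs_repr_pw[OF gH] by blast
  have mom: "moment \<sigma> t (Exy x a) = KK (pw a t) x" for x a
    unfolding moment_def KK_def pw_def
    by (rule Bochner_Integration.integral_cong[OF refl]) (simp add: hs_Exy space_eq)
  have mx: "monomial x \<alpha> = (\<Sum>a\<in>A. c a * moment \<sigma> t (Exy x a))" for x
  proof -
    have "monomial x \<alpha> = KK g x" using Kg[of x] by (rule sym)
    also have "\<dots> = (\<Sum>a\<in>A. c a * KK (pw a t) x)"
      unfolding g KK_def using int_Hs[OF t1 pw_Hs[OF t1]] by simp
    finally show ?thesis by (simp add: mom)
  qed
  obtain e where e: "bij_betw e {1..card A} A" using ex_bij_betw_nat_finite_1[OF finA] by blast
  obtain j0 :: 'n where True by blast
  define u0 :: "real^'n" where "u0 = axis j0 1"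
  have u0: "norm u0 = 1" by (simp add: u0_def)
  define m where "m = card A + 1"
  define y :: "nat \<Rightarrow> nat \<Rightarrow> real^'n" where "y s i = (if i \<le> card A then e i else u0)" for s i
  define f :: "nat \<Rightarrow> nat \<Rightarrow> real" where "f s i = (if s = t \<and> i \<le> card A then c (e i) else 0)" for s i
  have yn: "norm (y s i) = 1" if "i \<in> {1..m}" for s i
  proof (cases "i \<le> card A")
    case True
    then have "e i \<in> A" using e that by (auto simp: bij_betw_def)
    then show ?thesis using Au True by (auto simp: y_def)
  next
    case False then show ?thesis using u0 by (simp add: y_def)
  qed
  have sumeq: "(\<Sum>s=1..t. \<Sum>i=1..m. f s i * moment \<sigma> s (Exy x (y s i))) = monomial x \<alpha>" for x
  proof -
    have "(\<Sum>s=1..t. \<Sum>i=1..m. f s i * moment \<sigma> s (Exy x (y s i)))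
        = (\<Sum>s=1..t. if s = t then (\<Sum>i=1..m. f t i * moment \<sigma> t (Exy x (y t i))) else 0)"
      by (intro sum.cong refl) (auto simp: f_def)
    also have "\<dots> = (\<Sum>i=1..m. f t i * moment \<sigma> t (Exy x (y t i)))"
      using t1 by (simp add: sum.delta')
    also have "\<dots> = (\<Sum>i=1..card A. c (e i) * moment \<sigma> t (Exy x (e i)))"
    proof -
      have "{1..m} = insert (card A + 1) {1..card A}" by (auto simp: m_def)
      then have "(\<Sum>i=1..m. f t i * moment \<sigma> t (Exy x (y t i))) = (\<Sum>i=1..card A. f t i * moment \<sigma> t (Exy x (y t i)))"
        by (simp add: f_def)
      also have "\<dots> = (\<Sum>i=1..card A. c (e i) * moment \<sigma> t (Exy x (e i)))"
        by (intro sum.cong refl) (auto simp: f_def y_def)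
      finally show ?thesis .
    qed
    also have "\<dots> = (\<Sum>a\<in>A. c a * moment \<sigma> t (Exy x a))"
      by (rule sum.reindex_bij_betw[OF e])
    also have "\<dots> = monomial x \<alpha>" by (simp add: mx)
    finally show ?thesis .
  qed
  show ?thesis
  proof (rule exI[of _ m], rule exI[of _ y], rule exI[of _ f], intro conjI)
    show "1 \<le> m" by (simp add: m_def)
    show "\<forall>s\<in>{1..t}. \<forall>i\<in>{1..m}. norm (y s i) = 1" using yn by blast
    show "\<forall>x::real^'n. norm x = 1 \<longrightarrow> monomial x \<alpha> = (\<Sum>s=1..t. \<Sum>i=1..m. f s i * moment \<sigma> s (Exy x (y s i)))"
      using sumeq by (metis (no_types))
  qed
qed


end
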